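(* Let $Q:\mathcal{Z}\times\Theta\to\mathbb{R}$ be measurable with $A(\theta)=EQ(Z,\theta)$ existing for all $\theta\in\Theta$ and $A(e_1),\dots,A(e_M)$ finite, and let $Q_1(z,\theta,\theta')=Q(z,\theta)-Q(z,\theta')$. Assume that for some $\beta>0$ there is a Borel function $\Psi_\beta:\Theta\times\Theta\to\mathbb{R}_+$ such that $\theta\mapsto\Psi_\beta(\theta,\theta')$ is concave on $\Theta$ for each fixed $\theta'\in\Theta$, $\Psi_\beta(\theta,\theta)=1$, and $E\exp(-Q_1(Z,\theta,\theta')/\beta)\le\Psi_\beta(\theta,\theta')$ for all $\theta,\theta'\in\Theta$. Then the mirror averaging aggregate $\hat\theta_n$ with parameter $\beta$ satisfies, for any $M\ge2$, $n\ge1$, $$E_{n-1}A(\hat\theta_n)\le\min_{1\le j\le M}A(e_j)+\frac{\beta\log M}{n}.$$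
   Context: $(\mathcal{Z},\mathfrak{F})$ is a measurable space, $M\ge2$, $\Theta=\{\theta\in\mathbb{R}^M:\sum_j\theta^{(j)}=1,\theta^{(j)}\ge0\}$, $e_j$ the $j$th unit vector, $z^{(j)}$ the $j$th component of $z\in\mathbb{R}^M$. $Z$ is a $\mathcal{Z}$-valued random variable with distribution $P$, expectation $E$; $Z_1,\dots,Z_n$ i.i.d. copies of $Z$; $E_{n-1}$ is expectation w.r.t. $(Z_1,\dots,Z_{n-1})$. Mirror averaging aggregate with parameter $\beta>0$: $W_\beta(\zeta)=\beta\log\big(\frac1M\sum_{j}e^{-\zeta^{(j)}/\beta}\big)$; $\zeta_0=0$, $\zeta_i=\zeta_{i-1}+u_i$ for $i=1,\dots,n-1$ with $u_i=(Q(Z_i,e_1),\dots,Q(Z_i,e_M))^\top$; $\theta_i=-\nabla W_\beta(\zeta_i)$, i.e. $\theta_i^{(j)}=e^{-\zeta_i^{(j)}/\beta}/\sum_ke^{-\zeta_i^{(k)}/\beta}$, for $i=0,\dots,n-1$; $\hat\theta_n=\frac1n\sum_{i=1}^n\theta_{i-1}$. *)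

theory Defs
  imports "HOL-Analysis.Analysis" "HOL-Probability.Probability"
begin

definition Theta :: "(real ^ 'm) set" where
  "Theta = {\<theta>. (\<forall>j. \<theta> $ j \<ge> 0) \<and> (\<Sum>j\<in>UNIV. \<theta> $ j) = 1}"

text \<open>Extended-real valued expectation: positive part minus negative part
  (in ereal; note that infinity minus anything is infinity in Isabelle).\<close>
definition ext_expectation :: "'a measure \<Rightarrow> ('a \<Rightarrow> real) \<Rightarrow> ereal" where
  "ext_expectation N f =
     enn2ereal (\<integral>\<^sup>+ x. ennreal (f x) \<partial>N) - enn2ereal (\<integral>\<^sup>+ x. ennreal (- f x) \<partial>N)"

definition ext_expectation_exists :: "'a measure \<Rightarrow> ('a \<Rightarrow> real) \<Rightarrow> bool" where
  "ext_expectation_exists N f \<longleftrightarrow>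
     (\<integral>\<^sup>+ x. ennreal (f x) \<partial>N) \<noteq> \<infinity> \<or> (\<integral>\<^sup>+ x. ennreal (- f x) \<partial>N) \<noteq> \<infinity>"

definition ext_expectation_ereal :: "'a measure \<Rightarrow> ('a \<Rightarrow> ereal) \<Rightarrow> ereal" where
  "ext_expectation_ereal N g =
     enn2ereal (\<integral>\<^sup>+ x. e2ennreal (g x) \<partial>N) - enn2ereal (\<integral>\<^sup>+ x. e2ennreal (- g x) \<partial>N)"

text \<open>Mirror averaging. A sample path is omega :: nat => 'z, omega i = Z_i.
  e_j is axis j 1.  u_i = (Q(Z_i,e_1),...,Q(Z_i,e_M)).\<close>
definition ma_u :: "('z \<Rightarrow> real ^ 'm \<Rightarrow> real) \<Rightarrow> 'z \<Rightarrow> real ^ 'm" where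
  "ma_u Q z = (\<chi> j. Q z (axis j 1))"

definition ma_zeta :: "('z \<Rightarrow> real ^ 'm \<Rightarrow> real) \<Rightarrow> (nat \<Rightarrow> 'z) \<Rightarrow> nat \<Rightarrow> real ^ 'm" where
  "ma_zeta Q \<omega> i = (\<Sum>k\<in>{1..i}. ma_u Q (\<omega> k))"

text \<open>theta_i = - grad W_beta(zeta_i), written out explicitly.\<close>
definition ma_theta :: "real \<Rightarrow> ('z \<Rightarrow> real ^ 'm \<Rightarrow> real) \<Rightarrow> (nat \<Rightarrow> 'z) \<Rightarrow> nat \<Rightarrow> real ^ 'm" where
  "ma_theta \<beta> Q \<omega> i = (\<chi> j. exp (- (ma_zeta Q \<omega> i $ j) / \<beta>) /
                               (\<Sum>k\<in>UNIV. exp (- (ma_zeta Q \<omega> i $ k) / \<beta>)))"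

definition ma_hat :: "real \<Rightarrow> ('z \<Rightarrow> real ^ 'm \<Rightarrow> real) \<Rightarrow> nat \<Rightarrow> (nat \<Rightarrow> 'z) \<Rightarrow> real ^ 'm" where
  "ma_hat \<beta> Q n \<omega> = (1 / real n) *\<^sub>R (\<Sum>i\<in>{1..n}. ma_theta \<beta> Q \<omega> (i - 1))"

end

theory Submission
  imports Defs
begin


lemma enn2ereal_mono': "a \<le> b \<Longrightarrow> enn2ereal a \<le> enn2ereal b"
  by (simp add: less_eq_ennreal.rep_eq)

lemma enn2ereal_fin: "x < \<infinity> \<Longrightarrow> enn2ereal x = ereal (enn2real x)"
  by (cases x rule: ennreal_cases) (auto simp: enn2ereal_ennreal)

lemma ext_exp_integrable:
  fixes f :: "'a \<Rightarrow> real"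
  assumes "integrable N f"
  shows "ext_expectation N f = ereal (integral\<^sup>L N f)"
proof -
  have a: "(\<integral>\<^sup>+ x. ennreal (f x) \<partial>N) < \<infinity>" "(\<integral>\<^sup>+ x. ennreal (- f x) \<partial>N) < \<infinity>"
    using assms unfolding real_integrable_def by (auto simp: top.not_eq_extremum)
  show ?thesis
    unfolding ext_expectation_def real_lebesgue_integral_def[OF assms]
    using a by (simp add: enn2ereal_fin)
qed

lemma ereal_diff_mono_gen:
  fixes a b c d :: ereal
  assumes "a \<le> c" "d \<le> b" "0 \<le> a" "0 \<le> d"
  shows "a - b \<le> c - d"
  using assms by (cases a; cases b; cases c; cases d) auto

lemma ext_exp_mono:
  assumes "\<And>x. x \<in> space N \<Longrightarrow> f x \<le> g x"
  shows "ext_expectation N f \<le> ext_expectation N g"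
  unfolding ext_expectation_def
  apply (rule ereal_diff_mono_gen)
  using assms by (auto intro!: nn_integral_mono enn2ereal_mono' ennreal_leI simp: enn2ereal_nonneg)

lemma ext_exp_ereal_le:
  fixes F :: "'a \<Rightarrow> ereal" and g :: "'a \<Rightarrow> real"
  assumes "\<And>x. x \<in> space N \<Longrightarrow> F x \<le> ereal (g x)" "integrable N g"
  shows "ext_expectation_ereal N F \<le> ereal (integral\<^sup>L N g)"
proof -
  have 1: "e2ennreal (F x) \<le> ennreal (g x)" if "x \<in> space N" for x
    using e2ennreal_mono[OF assms(1)[OF that]] by (simp add: e2ennreal_ereal)
  have 2: "ennreal (- g x) \<le> e2ennreal (- F x)" if "x \<in> space N" for x
  proof -
    have "ereal (- g x) \<le> - F x" using assms(1)[OF that] by (cases "F x") auto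
    from e2ennreal_mono[OF this] show ?thesis by (simp add: e2ennreal_ereal)
  qed
  have "ext_expectation_ereal N F \<le> ext_expectation N g"
    unfolding ext_expectation_ereal_def ext_expectation_def
    apply (rule ereal_diff_mono_gen)
    using 1 2
    by (auto intro!: nn_integral_mono enn2ereal_mono' simp: enn2ereal_nonneg)
  then show ?thesis using ext_exp_integrable[OF assms(2)] by simp
qed



definition LSE :: "real \<Rightarrow> real^'m \<Rightarrow> real" where
  "LSE \<beta> \<zeta> = ln (\<Sum>k\<in>UNIV. exp (- (\<zeta> $ k) / \<beta>))"

lemma Ssum_pos: "(\<Sum>k\<in>(UNIV::'m::finite set). exp (f k :: real)) > 0"
  by (intro sum_pos) auto

lemma axis_in_Theta: "axis j 1 \<in> Theta"
  unfolding Theta_def by (auto simp: axis_def)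

lemma theta_in_Theta: "ma_theta \<beta> Q \<omega> i \<in> Theta"
proof -
  let ?S = "\<Sum>k\<in>UNIV. exp (- (ma_zeta Q \<omega> i $ k) / \<beta>)"
  have S: "?S > 0" by (rule Ssum_pos)
  show ?thesis unfolding Theta_def ma_theta_def
    using S by (auto simp: sum_divide_distrib[symmetric])
qed

lemma Theta_decomp: "(\<Sum>k\<in>UNIV. (\<theta> $ k) *\<^sub>R axis k (1::real)) = \<theta>"
  by (simp add: vec_eq_iff axis_def if_distrib cong: if_cong)

lemma hat_as_sum:
  "ma_hat \<beta> Q n \<omega> = (\<Sum>i\<in>{1..n}. (1 / real n) *\<^sub>R ma_theta \<beta> Q \<omega> (i - 1))"
  unfolding ma_hat_def by (simp add: scaleR_sum_right)

lemma convex_Theta: "convex (Theta :: (real^'m) set)"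
  unfolding convex_def Theta_def
  by (auto simp: sum.distrib sum_distrib_left[symmetric] intro!: add_nonneg_nonneg mult_nonneg_nonneg)

lemma hat_in_Theta:
  assumes "n \<ge> 1"
  shows "ma_hat \<beta> Q n \<omega> \<in> Theta"
  unfolding hat_as_sum
  apply (rule convex_sum[OF _ convex_Theta])
  using assms by (auto intro: theta_in_Theta)

lemma LSE_identity:
  fixes a :: real and u :: "real^'m"
  shows "ln (\<Sum>k\<in>UNIV. ma_theta \<beta> Q \<omega> i $ k * exp ((a - u $ k) / \<beta>))
       = a / \<beta> + LSE \<beta> (ma_zeta Q \<omega> i + u) - LSE \<beta> (ma_zeta Q \<omega> i)"
proof -
  let ?z = "ma_zeta Q \<omega> i"
  let ?S = "\<Sum>k\<in>UNIV. exp (- (?z $ k) / \<beta>)"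
  let ?T = "\<Sum>k\<in>UNIV. exp (- ((?z + u) $ k) / \<beta>)"
  have S: "?S > 0" "?T > 0" by (rule Ssum_pos)+
  have "(\<Sum>k\<in>UNIV. ma_theta \<beta> Q \<omega> i $ k * exp ((a - u $ k) / \<beta>))
      = exp (a / \<beta>) * ?T / ?S"
    unfolding ma_theta_def
    by (simp add: sum_divide_distrib sum_distrib_left diff_divide_distrib add_divide_distrib
         exp_diff exp_add[symmetric] algebra_simps)
  then show ?thesis using S unfolding LSE_def by (simp add: ln_div ln_mult)
qed



lemma LSE_lower:
  assumes "\<beta> > 0"
  shows "LSE \<beta> \<zeta> \<ge> - (\<zeta> $ j) / \<beta>"
proof -
  have "exp (- (\<zeta> $ j) / \<beta>) \<le> (\<Sum>k\<in>UNIV. exp (- (\<zeta> $ k) / \<beta>))"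
    by (rule member_le_sum) auto
  then have "ln (exp (- (\<zeta> $ j) / \<beta>)) \<le> LSE \<beta> \<zeta>"
    unfolding LSE_def by (subst ln_le_cancel_iff) (auto intro!: sum_pos)
  then show ?thesis by simp
qed

lemma LSE_abs:
  assumes "\<beta> > 0"
  shows "\<bar>LSE \<beta> (\<zeta>::real^'m)\<bar> \<le> ln (real CARD('m)) + (\<Sum>k\<in>UNIV. \<bar>\<zeta> $ k\<bar>) / \<beta>"
proof -
  let ?B = "(\<Sum>k\<in>UNIV. \<bar>\<zeta> $ k\<bar>) / \<beta>"
  have B0: "?B \<ge> 0" using assms by (auto intro!: divide_nonneg_pos sum_nonneg)
  have lnC: "ln (real CARD('m)) \<ge> 0" by simp
  obtain j :: 'm where True by simp
  have "\<bar>\<zeta> $ j\<bar> \<le> (\<Sum>k\<in>UNIV. \<bar>\<zeta> $ k\<bar>)" by (rule member_le_sum) auto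
  then have "- (\<zeta> $ j) / \<beta> \<ge> - ?B" using assms by (simp add: divide_right_mono)
  with LSE_lower[OF assms, of \<zeta> j] have lo: "LSE \<beta> \<zeta> \<ge> - ?B" by linarith
  have "(\<Sum>k\<in>UNIV. exp (- (\<zeta> $ k) / \<beta>)) \<le> (\<Sum>k\<in>(UNIV::'m set). exp ?B)"
  proof (rule sum_mono)
    fix k :: 'm
    have "\<bar>\<zeta> $ k\<bar> \<le> (\<Sum>k\<in>UNIV. \<bar>\<zeta> $ k\<bar>)" by (rule member_le_sum) auto
    then have "- (\<zeta> $ k) \<le> (\<Sum>k\<in>UNIV. \<bar>\<zeta> $ k\<bar>)" by linarith
    then have "- (\<zeta> $ k) / \<beta> \<le> ?B" using assms by (rule divide_right_mono[OF _ less_imp_le])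
    then show "exp (- (\<zeta> $ k) / \<beta>) \<le> exp ?B" by simp
  qed
  also have "\<dots> = real CARD('m) * exp ?B" by simp
  finally have "LSE \<beta> \<zeta> \<le> ln (real CARD('m) * exp ?B)"
    unfolding LSE_def by (subst ln_le_cancel_iff) (auto intro: Ssum_pos)
  also have "\<dots> = ln (real CARD('m)) + ?B" by (simp add: ln_mult)
  finally show ?thesis using lo lnC B0 by linarith
qed

lemma LSE_zero: "LSE \<beta> (0::real^'m) = ln (real CARD('m))"
  unfolding LSE_def by simp



lemma Q_slice_meas:
  assumes Q_meas: "(\<lambda>(z, \<theta>). Q z \<theta>) \<in> borel_measurable (P \<Otimes>\<^sub>M restrict_space borel Theta)"
    and "\<theta> \<in> Theta"
  shows "(\<lambda>z. Q z \<theta>) \<in> borel_measurable P"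
proof -
  have "(\<lambda>z. (z, \<theta>)) \<in> measurable P (P \<Otimes>\<^sub>M restrict_space borel Theta)"
    by (rule measurable_Pair2') (use assms(2) in \<open>simp add: space_restrict_space\<close>)
  from measurable_comp[OF this Q_meas] show ?thesis by (simp add: comp_def)
qed

lemma psi_int:
  fixes Q :: "'z \<Rightarrow> real ^ 'm \<Rightarrow> real"
  assumes P: "prob_space P"
    and Q_meas: "(\<lambda>(z, \<theta>). Q z \<theta>) \<in> borel_measurable (P \<Otimes>\<^sub>M restrict_space borel Theta)"
    and Psi_nonneg: "\<Psi> \<theta> \<theta>' \<ge> 0"
    and Psi_bound: "(\<integral>\<^sup>+ z. ennreal (exp (- (Q z \<theta> - Q z \<theta>') / \<beta>)) \<partial>P) \<le> ennreal (\<Psi> \<theta> \<theta>')"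
    and th: "\<theta> \<in> Theta" "\<theta>' \<in> Theta"
  shows "integrable P (\<lambda>z. exp (- (Q z \<theta> - Q z \<theta>') / \<beta>))"
    and "(\<integral>z. exp (- (Q z \<theta> - Q z \<theta>') / \<beta>) \<partial>P) \<le> \<Psi> \<theta> \<theta>'"
proof -
  have m1: "(\<lambda>z. Q z \<theta>) \<in> borel_measurable P" "(\<lambda>z. Q z \<theta>') \<in> borel_measurable P"
    using Q_slice_meas[OF Q_meas] th by auto
  have m: "(\<lambda>z. exp (- (Q z \<theta> - Q z \<theta>') / \<beta>)) \<in> borel_measurable P"
    using m1 by measurable
  show i: "integrable P (\<lambda>z. exp (- (Q z \<theta> - Q z \<theta>') / \<beta>))"
  proof (rule integrableI_bounded[OF m])
    show "(\<integral>\<^sup>+ z. ennreal (norm (exp (- (Q z \<theta> - Q z \<theta>') / \<beta>))) \<partial>P) < \<infinity>"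
      using Psi_bound by (simp add: le_less_trans)
  qed
  have "ennreal (\<integral>z. exp (- (Q z \<theta> - Q z \<theta>') / \<beta>) \<partial>P)
        = (\<integral>\<^sup>+ z. ennreal (exp (- (Q z \<theta> - Q z \<theta>') / \<beta>)) \<partial>P)"
    by (rule nn_integral_eq_integral[symmetric, OF i]) auto
  with Psi_bound have "ennreal (\<integral>z. exp (- (Q z \<theta> - Q z \<theta>') / \<beta>) \<partial>P) \<le> ennreal (\<Psi> \<theta> \<theta>')"
    by simp
  then show "(\<integral>z. exp (- (Q z \<theta> - Q z \<theta>') / \<beta>) \<partial>P) \<le> \<Psi> \<theta> \<theta>'"
    using Psi_nonneg by (simp add: ennreal_le_iff)
qed

lemma LSE_shift_int:
  fixes Q :: "'z \<Rightarrow> real ^ 'm \<Rightarrow> real"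
  assumes P: "prob_space P" and "\<beta> > 0"
    and A: "\<And>j. integrable P (\<lambda>z. Q z (axis j 1))"
  shows "integrable P (\<lambda>z. LSE \<beta> (c + ma_u Q z))"
proof -
  have [measurable]: "(\<lambda>z. Q z (axis j 1)) \<in> borel_measurable P" for j
    using A by auto
  have eq: "LSE \<beta> (c + ma_u Q z) = ln (\<Sum>k\<in>UNIV. exp (- (c $ k + Q z (axis k 1)) / \<beta>))" for z
    by (simp add: LSE_def ma_u_def)
  show ?thesis
  proof (rule Bochner_Integration.integrable_bound)
    show "integrable P (\<lambda>z. ln (real CARD('m)) + (\<Sum>k\<in>UNIV. \<bar>c $ k\<bar> + \<bar>Q z (axis k 1)\<bar>) / \<beta>)"
      using P A by (intro Bochner_Integration.integrable_add integrable_divide Bochner_Integration.integrable_sum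
          finite_measure.integrable_const prob_space.finite_measure integrable_abs) auto
    show "(\<lambda>z. LSE \<beta> (c + ma_u Q z)) \<in> borel_measurable P"
      unfolding eq by measurable
    show "AE z in P. norm (LSE \<beta> (c + ma_u Q z)) \<le> norm (ln (real CARD('m)) + (\<Sum>k\<in>UNIV. \<bar>c $ k\<bar> + \<bar>Q z (axis k 1)\<bar>) / \<beta>)"
    proof (intro AE_I2)
      fix z
      have "\<bar>LSE \<beta> (c + ma_u Q z)\<bar> \<le> ln (real CARD('m)) + (\<Sum>k\<in>UNIV. \<bar>(c + ma_u Q z) $ k\<bar>) / \<beta>"
        by (rule LSE_abs[OF assms(2)])
      also have "\<dots> \<le> ln (real CARD('m)) + (\<Sum>k\<in>UNIV. \<bar>c $ k\<bar> + \<bar>Q z (axis k 1)\<bar>) / \<beta>"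
        using assms(2) by (auto simp: ma_u_def intro!: divide_right_mono sum_mono abs_triangle_ineq)
      finally show "norm (LSE \<beta> (c + ma_u Q z)) \<le> norm (ln (real CARD('m)) + (\<Sum>k\<in>UNIV. \<bar>c $ k\<bar> + \<bar>Q z (axis k 1)\<bar>) / \<beta>)"
        by simp
    qed
  qed
qed



lemma theta_pos: "\<beta> \<noteq> 0 \<Longrightarrow> ma_theta \<beta> Q \<omega> i $ k > 0"
  unfolding ma_theta_def by (auto intro!: divide_pos_pos Ssum_pos)

lemma per_omega:
  fixes P :: "'z measure"
    and Q :: "'z \<Rightarrow> real ^ 'm \<Rightarrow> real"
    and \<Psi> :: "real ^ 'm \<Rightarrow> real ^ 'm \<Rightarrow> real"
    and \<beta> :: real and n :: nat
  assumes P: "prob_space P"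
    and n: "n \<ge> 1"
    and Q_meas: "(\<lambda>(z, \<theta>). Q z \<theta>) \<in> borel_measurable (P \<Otimes>\<^sub>M restrict_space borel Theta)"
    and A_vertex_finite: "\<And>j. integrable P (\<lambda>z. Q z (axis j 1))"
    and beta: "\<beta> > 0"
    and Psi_nonneg: "\<And>\<theta> \<theta>'. \<theta> \<in> Theta \<Longrightarrow> \<theta>' \<in> Theta \<Longrightarrow> \<Psi> \<theta> \<theta>' \<ge> 0"
    and Psi_concave: "\<And>\<theta>'. \<theta>' \<in> Theta \<Longrightarrow> concave_on Theta (\<lambda>\<theta>. \<Psi> \<theta> \<theta>')"
    and Psi_diag: "\<And>\<theta>. \<theta> \<in> Theta \<Longrightarrow> \<Psi> \<theta> \<theta> = 1"
    and Psi_bound: "\<And>\<theta> \<theta>'. \<theta> \<in> Theta \<Longrightarrow> \<theta>' \<in> Theta \<Longrightarrow>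
          (\<integral>\<^sup>+ z. ennreal (exp (- (Q z \<theta> - Q z \<theta>') / \<beta>)) \<partial>P) \<le> ennreal (\<Psi> \<theta> \<theta>')"
  shows "ext_expectation P (\<lambda>z. Q z (ma_hat \<beta> Q n \<omega>))
     \<le> ereal (\<beta> / real n * (\<Sum>i\<in>{1..n}. LSE \<beta> (ma_zeta Q \<omega> (i - 1))
                 - (\<integral>z. LSE \<beta> (ma_zeta Q \<omega> (i - 1) + ma_u Q z) \<partial>P)))"
proof -
  interpret prob_space P by (rule P)
  define h where "h = ma_hat \<beta> Q n \<omega>"
  define th where "th i = ma_theta \<beta> Q \<omega> i" for i
  define ze where "ze i = ma_zeta Q \<omega> i" for i
  define F where "F i z = exp (- (Q z (th (i - 1)) - Q z h) / \<beta>)" for i z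
  define E where "E i z = (\<Sum>k\<in>UNIV. th (i - 1) $ k * exp (- (Q z (axis k 1) - Q z (th (i - 1))) / \<beta>))" for i z
  define G where "G i z = LSE \<beta> (ze (i - 1) + ma_u Q z)" for i z
  define H where "H z = \<beta> / real n * (\<Sum>i\<in>{1..n}. (F i z - 1) + (E i z - 1) + (LSE \<beta> (ze (i - 1)) - G i z))" for z
  have hT: "h \<in> Theta" unfolding h_def using n by (rule hat_in_Theta)
  have thT: "th i \<in> Theta" for i unfolding th_def by (rule theta_in_Theta)
  have axT: "axis k 1 \<in> Theta" for k :: 'm by (rule axis_in_Theta)
  have PI: "integrable P (\<lambda>z. exp (- (Q z \<theta> - Q z \<theta>') / \<beta>)) \<and>
      (\<integral>z. exp (- (Q z \<theta> - Q z \<theta>') / \<beta>) \<partial>P) \<le> \<Psi> \<theta> \<theta>'"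
    if "\<theta> \<in> Theta" "\<theta>' \<in> Theta" for \<theta> \<theta>'
    using psi_int[where \<Psi>=\<Psi> and \<theta>=\<theta> and \<theta>'=\<theta>' and \<beta>=\<beta>, OF P Q_meas Psi_nonneg[OF that] Psi_bound[OF that] that] by auto
  have Fint: "integrable P (F i)" and Fle: "integral\<^sup>L P (F i) \<le> \<Psi> (th (i - 1)) h" for i
    unfolding F_def using PI thT hT by auto
  have Eint0: "integrable P (\<lambda>z. exp (- (Q z (axis k 1) - Q z (th (i - 1))) / \<beta>))"
    and Ele0: "(\<integral>z. exp (- (Q z (axis k 1) - Q z (th (i - 1))) / \<beta>) \<partial>P) \<le> \<Psi> (axis k 1) (th (i - 1))"
    for i k
    using PI thT axT by auto
  have Eint: "integrable P (E i)" for i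
    unfolding E_def using Eint0 by (intro Bochner_Integration.integrable_sum integrable_mult_right) auto
  have Gint: "integrable P (G i)" for i
    unfolding G_def by (rule LSE_shift_int[where Q=Q, OF P beta A_vertex_finite])
  have Hint: "integrable P H"
    unfolding H_def using Fint Eint Gint
    by (intro integrable_mult_right Bochner_Integration.integrable_sum Bochner_Integration.integrable_add
        Bochner_Integration.integrable_diff) auto
  have Ele: "integral\<^sup>L P (E i) \<le> 1" for i
  proof -
    have "integral\<^sup>L P (E i) = (\<Sum>k\<in>UNIV. th (i - 1) $ k * (\<integral>z. exp (- (Q z (axis k 1) - Q z (th (i - 1))) / \<beta>) \<partial>P))"
      unfolding E_def using Eint0 by (simp add: Bochner_Integration.integral_sum integrable_mult_right)
    also have "\<dots> \<le> (\<Sum>k\<in>UNIV. th (i - 1) $ k * \<Psi> (axis k 1) (th (i - 1)))"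
      using Ele0 thT unfolding Theta_def by (intro sum_mono mult_left_mono) auto
    also have "\<dots> \<le> \<Psi> (\<Sum>k\<in>UNIV. th (i - 1) $ k *\<^sub>R axis k 1) (th (i - 1))"
      using thT axT unfolding Theta_def
      by (intro concave_on_sum[OF _ _ Psi_concave[OF thT]]) (auto simp: Theta_def)
    also have "\<dots> = 1" by (simp add: Theta_decomp Psi_diag thT)
    finally show ?thesis .
  qed
  have Fsum: "(\<Sum>i\<in>{1..n}. integral\<^sup>L P (F i)) \<le> real n"
  proof -
    have "(\<Sum>i\<in>{1..n}. (1 / real n) * integral\<^sup>L P (F i)) \<le> (\<Sum>i\<in>{1..n}. (1 / real n) * \<Psi> (th (i - 1)) h)"
      using Fle by (intro sum_mono mult_left_mono) auto
    also have "\<dots> \<le> \<Psi> (\<Sum>i\<in>{1..n}. (1 / real n) *\<^sub>R th (i - 1)) h"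
      using n thT by (intro concave_on_sum[OF _ _ Psi_concave[OF hT]]) auto
    also have "(\<Sum>i\<in>{1..n}. (1 / real n) *\<^sub>R th (i - 1)) = h"
      unfolding h_def th_def by (simp add: hat_as_sum)
    finally have "(1 / real n) * (\<Sum>i\<in>{1..n}. integral\<^sup>L P (F i)) \<le> 1"
      using Psi_diag[OF hT] by (simp add: sum_distrib_left)
    then show ?thesis using n by (simp add: field_simps)
  qed
  have pw: "Q z h \<le> H z" for z
  proof -
    have Epos: "E i z > 0" for i
      unfolding E_def using theta_pos[of \<beta>] beta
      by (intro sum_pos mult_pos_pos) (auto simp: th_def)
    have lnE: "ln (E i z) = Q z (th (i - 1)) / \<beta> + G i z - LSE \<beta> (ze (i - 1))" for i
    proof -
      have "E i z = (\<Sum>k\<in>UNIV. ma_theta \<beta> Q \<omega> (i - 1) $ k * exp ((Q z (th (i - 1)) - ma_u Q z $ k) / \<beta>))"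
        unfolding E_def th_def ma_u_def by (simp add: minus_diff_eq)
      then show ?thesis unfolding G_def ze_def by (simp add: LSE_identity)
    qed
    have "Q z h = \<beta> / real n * (\<Sum>i\<in>{1..n}. (- (Q z (th (i - 1)) - Q z h) / \<beta>) + ln (E i z) + (LSE \<beta> (ze (i - 1)) - G i z))"
      using n beta by (simp add: lnE field_simps)
    also have "\<dots> \<le> H z"
      unfolding H_def F_def
    proof (intro mult_left_mono sum_mono add_mono)
      fix i
      show "- (Q z (th (i - 1)) - Q z h) / \<beta> \<le> exp (- (Q z (th (i - 1)) - Q z h) / \<beta>) - 1"
        using exp_ge_add_one_self[of "- (Q z (th (i - 1)) - Q z h) / \<beta>"] by linarith
      show "ln (E i z) \<le> E i z - 1" using Epos by (rule ln_le_minus_one)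
    qed (use beta in auto)
    finally show ?thesis .
  qed
  have "ext_expectation P (\<lambda>z. Q z h) \<le> ext_expectation P H"
    using pw by (rule ext_exp_mono)
  also have "\<dots> = ereal (integral\<^sup>L P H)" by (rule ext_exp_integrable[OF Hint])
  also have "integral\<^sup>L P H = \<beta> / real n * ((\<Sum>i\<in>{1..n}. integral\<^sup>L P (F i) - 1) + (\<Sum>i\<in>{1..n}. integral\<^sup>L P (E i) - 1)
        + (\<Sum>i\<in>{1..n}. LSE \<beta> (ze (i - 1)) - integral\<^sup>L P (G i)))"
    unfolding H_def using Fint Eint Gint
    by (simp add: Bochner_Integration.integral_sum Bochner_Integration.integral_add Bochner_Integration.integral_diff
        Bochner_Integration.integrable_sum Bochner_Integration.integrable_add Bochner_Integration.integrable_diff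
        sum.distrib prob_space sum_subtractf)
  also have "\<dots> \<le> \<beta> / real n * (\<Sum>i\<in>{1..n}. LSE \<beta> (ze (i - 1)) - integral\<^sup>L P (G i))"
  proof -
    have "(\<Sum>i\<in>{1..n}. integral\<^sup>L P (F i) - 1) \<le> 0" using Fsum by (simp add: sum_subtractf)
    moreover have "(\<Sum>i\<in>{1..n}. integral\<^sup>L P (E i) - 1) \<le> 0" using Ele by (intro sum_nonpos) auto
    ultimately show ?thesis using beta by (intro mult_left_mono) auto
  qed
  finally show ?thesis unfolding h_def ze_def G_def by simp
qed



lemma zeta_comp: "ma_zeta Q w i $ k = (\<Sum>m\<in>{1..i}. Q (w m) (axis k 1))"
  by (simp add: ma_zeta_def ma_u_def)

lemma zeta_upd_prev: "ma_zeta Q ((w(i := y))) (i - 1) = ma_zeta Q w (i - 1)"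
  unfolding ma_zeta_def by (intro sum.cong) auto

lemma zeta_upd: "i \<ge> 1 \<Longrightarrow> ma_zeta Q ((w(i := y))) i = ma_zeta Q w (i - 1) + ma_u Q y"
proof -
  assume "i \<ge> 1"
  then obtain m where m: "i = Suc m" by (cases i) auto
  have "ma_zeta Q ((w(i := y))) i = ma_zeta Q ((w(i := y))) (i - 1) + ma_u Q y"
    unfolding ma_zeta_def m by (simp add: sum.cl_ivl_Suc)
  then show ?thesis using zeta_upd_prev[of Q w i y] by simp
qed

lemma PiM_comp_int:
  fixes f :: "'z \<Rightarrow> real"
  assumes P: "prob_space P" and k: "k \<in> I" and f: "integrable P f"
  shows "integrable (PiM I (\<lambda>_. P)) (\<lambda>w. f (w k))"
    and "(\<integral>w. f (w k) \<partial>PiM I (\<lambda>_. P)) = integral\<^sup>L P f"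
proof -
  have d: "distr (PiM I (\<lambda>_. P)) P (\<lambda>w. w k) = P"
    using distr_PiM_component[of I "\<lambda>_. P" k] P k by simp
  have m: "(\<lambda>w. w k) \<in> measurable (PiM I (\<lambda>_. P)) P"
    using k by (rule measurable_component_singleton)
  have fm: "f \<in> borel_measurable P" using f by auto
  show "integrable (PiM I (\<lambda>_. P)) (\<lambda>w. f (w k))"
    using integrable_distr_eq[OF m fm] f d by simp
  show "(\<integral>w. f (w k) \<partial>PiM I (\<lambda>_. P)) = integral\<^sup>L P f"
    using integral_distr[OF m fm] d by simp
qed




lemma comp_meas:
  fixes Q :: "'z \<Rightarrow> real ^ 'm \<Rightarrow> real"
  assumes A: "\<And>j. integrable P (\<lambda>z. Q z (axis j 1))" and "m \<in> I"
  shows "(\<lambda>w. Q (w m) (axis k 1)) \<in> borel_measurable (PiM I (\<lambda>_. P))"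
proof -
  have "(\<lambda>z. Q z (axis k 1)) \<in> borel_measurable P" using A by auto
  from measurable_compose[OF measurable_component_singleton[OF assms(2)] this]
  show ?thesis .
qed

lemma zsum_meas:
  fixes Q :: "'z \<Rightarrow> real ^ 'm \<Rightarrow> real"
  assumes A: "\<And>j. integrable P (\<lambda>z. Q z (axis j 1))" and "{1..i} \<subseteq> I"
  shows "(\<lambda>w. \<Sum>m\<in>{1..i}. Q (w m) (axis k 1)) \<in> borel_measurable (PiM I (\<lambda>_. P))"
  using assms by (intro borel_measurable_sum comp_meas[where Q=Q and P=P, OF A]) auto

lemma LSE_zeta_int:
  fixes Q :: "'z \<Rightarrow> real ^ 'm \<Rightarrow> real"
  assumes P: "prob_space P" and beta: "\<beta> > 0"
    and A: "\<And>j. integrable P (\<lambda>z. Q z (axis j 1))" and sub: "{1..i} \<subseteq> I"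
  shows "integrable (PiM I (\<lambda>_. P)) (\<lambda>w. LSE \<beta> (ma_zeta Q w i))"
proof -
  interpret PI: prob_space "PiM I (\<lambda>_. P)" using P by (intro prob_space_PiM)
  have [measurable]: "(\<lambda>w. \<Sum>m\<in>{1..i}. Q (w m) (axis k 1)) \<in> borel_measurable (PiM I (\<lambda>_. P))" for k
    by (rule zsum_meas[where Q=Q and P=P, OF A sub])
  have eq: "LSE \<beta> (ma_zeta Q w i) = ln (\<Sum>k\<in>UNIV. exp (- (\<Sum>m\<in>{1..i}. Q (w m) (axis k 1)) / \<beta>))" for w
    by (simp add: LSE_def zeta_comp)
  show ?thesis
  proof (rule Bochner_Integration.integrable_bound)
    show "integrable (PiM I (\<lambda>_. P)) (\<lambda>w. ln (real CARD('m)) + (\<Sum>k\<in>UNIV. \<Sum>m\<in>{1..i}. \<bar>Q (w m) (axis k 1)\<bar>) / \<beta>)"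
      using P A sub by (intro Bochner_Integration.integrable_add integrable_divide Bochner_Integration.integrable_sum
          PI.integrable_const integrable_abs PiM_comp_int(1)) auto
    show "(\<lambda>w. LSE \<beta> (ma_zeta Q w i)) \<in> borel_measurable (PiM I (\<lambda>_. P))"
      unfolding eq by measurable
    show "AE w in PiM I (\<lambda>_. P). norm (LSE \<beta> (ma_zeta Q w i)) \<le> norm (ln (real CARD('m)) + (\<Sum>k\<in>UNIV. \<Sum>m\<in>{1..i}. \<bar>Q (w m) (axis k 1)\<bar>) / \<beta>)"
    proof (intro AE_I2)
      fix w
      have "\<bar>LSE \<beta> (ma_zeta Q w i)\<bar> \<le> ln (real CARD('m)) + (\<Sum>k\<in>UNIV. \<bar>ma_zeta Q w i $ k\<bar>) / \<beta>"
        by (rule LSE_abs[OF beta])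
      also have "\<dots> \<le> ln (real CARD('m)) + (\<Sum>k\<in>UNIV. \<Sum>m\<in>{1..i}. \<bar>Q (w m) (axis k 1)\<bar>) / \<beta>"
        using beta unfolding zeta_comp by (auto intro!: divide_right_mono sum_mono sum_abs)
      finally show "norm (LSE \<beta> (ma_zeta Q w i)) \<le> norm (ln (real CARD('m)) + (\<Sum>k\<in>UNIV. \<Sum>m\<in>{1..i}. \<bar>Q (w m) (axis k 1)\<bar>) / \<beta>)"
        by (simp add: sum_nonneg)
    qed
  qed
qed




lemma g_int:
  fixes Q :: "'z \<Rightarrow> real ^ 'm \<Rightarrow> real"
  assumes P: "prob_space P" and beta: "\<beta> > 0"
    and A: "\<And>j. integrable P (\<lambda>z. Q z (axis j 1))" and sub: "{1..i} \<subseteq> I"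
  shows "integrable (PiM I (\<lambda>_. P)) (\<lambda>w. \<integral>z. LSE \<beta> (ma_zeta Q w i + ma_u Q z) \<partial>P)"
proof -
  interpret PI: prob_space "PiM I (\<lambda>_. P)" using P by (intro prob_space_PiM)
  interpret P: prob_space P by (rule P)
  have qm[measurable]: "(\<lambda>z. Q z (axis k 1)) \<in> borel_measurable P" for k using A by auto
  have [measurable]: "(\<lambda>w. \<Sum>m\<in>{1..i}. Q (w m) (axis k 1)) \<in> borel_measurable (PiM I (\<lambda>_. P))" for k
    by (rule zsum_meas[where Q=Q and P=P, OF A sub])
  have eq: "LSE \<beta> (ma_zeta Q w i + ma_u Q z) = ln (\<Sum>k\<in>UNIV. exp (- ((\<Sum>m\<in>{1..i}. Q (w m) (axis k 1)) + Q z (axis k 1)) / \<beta>))" for w z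
    by (simp add: LSE_def zeta_comp ma_u_def)
  have meas: "(\<lambda>w. \<integral>z. LSE \<beta> (ma_zeta Q w i + ma_u Q z) \<partial>P) \<in> borel_measurable (PiM I (\<lambda>_. P))"
    unfolding eq
    apply (rule P.borel_measurable_lebesgue_integral)
    unfolding case_prod_beta
    by measurable
  let ?B = "\<lambda>w. ln (real CARD('m)) + (\<Sum>k\<in>UNIV. (\<Sum>m\<in>{1..i}. \<bar>Q (w m) (axis k 1)\<bar>) + (\<integral>z. \<bar>Q z (axis k 1)\<bar> \<partial>P)) / \<beta>"
  show ?thesis
  proof (rule Bochner_Integration.integrable_bound)
    show "integrable (PiM I (\<lambda>_. P)) ?B"
      using P A sub by (intro Bochner_Integration.integrable_add integrable_divide Bochner_Integration.integrable_sum
          PI.integrable_const integrable_abs PiM_comp_int(1)) auto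
    show "(\<lambda>w. \<integral>z. LSE \<beta> (ma_zeta Q w i + ma_u Q z) \<partial>P) \<in> borel_measurable (PiM I (\<lambda>_. P))"
      by (rule meas)
    show "AE w in PiM I (\<lambda>_. P). norm (\<integral>z. LSE \<beta> (ma_zeta Q w i + ma_u Q z) \<partial>P) \<le> norm (?B w)"
    proof (intro AE_I2)
      fix w
      let ?c = "ma_zeta Q w i"
      have i1: "integrable P (\<lambda>z. LSE \<beta> (?c + ma_u Q z))"
        by (rule LSE_shift_int[where Q=Q, OF P beta A])
      have i2: "integrable P (\<lambda>z. ln (real CARD('m)) + (\<Sum>k\<in>UNIV. \<bar>?c $ k\<bar> + \<bar>Q z (axis k 1)\<bar>) / \<beta>)"
        using A by (intro Bochner_Integration.integrable_add integrable_divide Bochner_Integration.integrable_sum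
          P.integrable_const integrable_abs) auto
      have "norm (\<integral>z. LSE \<beta> (?c + ma_u Q z) \<partial>P) \<le> (\<integral>z. norm (LSE \<beta> (?c + ma_u Q z)) \<partial>P)"
        by (rule integral_norm_bound)
      also have "\<dots> \<le> (\<integral>z. ln (real CARD('m)) + (\<Sum>k\<in>UNIV. \<bar>?c $ k\<bar> + \<bar>Q z (axis k 1)\<bar>) / \<beta> \<partial>P)"
      proof (rule integral_mono[OF _ i2])
        show "integrable P (\<lambda>z. norm (LSE \<beta> (?c + ma_u Q z)))" using i1 by auto
        fix z
        have "\<bar>LSE \<beta> (?c + ma_u Q z)\<bar> \<le> ln (real CARD('m)) + (\<Sum>k\<in>UNIV. \<bar>(?c + ma_u Q z) $ k\<bar>) / \<beta>"
          by (rule LSE_abs[OF beta])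
        also have "\<dots> \<le> ln (real CARD('m)) + (\<Sum>k\<in>UNIV. \<bar>?c $ k\<bar> + \<bar>Q z (axis k 1)\<bar>) / \<beta>"
          using beta by (auto simp: ma_u_def intro!: divide_right_mono sum_mono abs_triangle_ineq)
        finally show "norm (LSE \<beta> (?c + ma_u Q z)) \<le> ln (real CARD('m)) + (\<Sum>k\<in>UNIV. \<bar>?c $ k\<bar> + \<bar>Q z (axis k 1)\<bar>) / \<beta>"
          by simp
      qed
      also have "\<dots> = ln (real CARD('m)) + (\<Sum>k\<in>UNIV. \<bar>?c $ k\<bar> + (\<integral>z. \<bar>Q z (axis k 1)\<bar> \<partial>P)) / \<beta>"
        using A by (simp add: Bochner_Integration.integral_add Bochner_Integration.integral_sum
            Bochner_Integration.integrable_sum integrable_abs P.prob_space)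
      also have "\<dots> \<le> ?B w"
        using beta unfolding zeta_comp by (auto intro!: divide_right_mono sum_mono sum_abs)
      also have "\<dots> \<le> norm (?B w)" by simp
      finally show "norm (\<integral>z. LSE \<beta> (ma_zeta Q w i + ma_u Q z) \<partial>P) \<le> norm (?B w)" .
    qed
  qed
qed




lemma telescope_step:
  fixes Q :: "'z \<Rightarrow> real ^ 'm \<Rightarrow> real"
  assumes P: "prob_space P" and beta: "\<beta> > 0"
    and A: "\<And>j. integrable P (\<lambda>z. Q z (axis j 1))" and sub: "{1..i} \<subseteq> I"
    and fin: "finite I" and i: "i \<ge> 1"
  shows "(\<integral>w. LSE \<beta> (ma_zeta Q w i) \<partial>PiM I (\<lambda>_. P))
       = (\<integral>w. (\<integral>z. LSE \<beta> (ma_zeta Q w (i - 1) + ma_u Q z) \<partial>P) \<partial>PiM I (\<lambda>_. P))"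
proof -
  interpret P: prob_space P by (rule P)
  interpret product_sigma_finite "\<lambda>_. P"
    by unfold_locales
  define J where "J = I - {i}"
  have iI: "i \<in> I" using sub i by auto
  have IJ: "I = insert i J" and iJ: "i \<notin> J" and finJ: "finite J"
    using iI fin unfolding J_def by auto
  have sub': "{1..i - 1} \<subseteq> I" using sub by (auto simp: subset_iff)
  let ?g = "\<lambda>w. \<integral>z. LSE \<beta> (ma_zeta Q w (i - 1) + ma_u Q z) \<partial>P"
  have "(\<integral>w. LSE \<beta> (ma_zeta Q w i) \<partial>PiM I (\<lambda>_. P))
      = (\<integral>w. (\<integral>y. LSE \<beta> (ma_zeta Q (w(i := y)) i) \<partial>P) \<partial>PiM J (\<lambda>_. P))"
    using LSE_zeta_int[where Q=Q, OF P beta A sub] unfolding IJ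
    by (rule product_integral_insert[OF finJ iJ])
  also have "\<dots> = (\<integral>w. ?g w \<partial>PiM J (\<lambda>_. P))"
    using i by (simp add: zeta_upd)
  also have "\<dots> = (\<integral>w. (\<integral>y. ?g (w(i := y)) \<partial>P) \<partial>PiM J (\<lambda>_. P))"
    unfolding zeta_upd_prev by (simp add: P.prob_space)
  also have "\<dots> = (\<integral>w. ?g w \<partial>PiM I (\<lambda>_. P))"
    using g_int[where Q=Q, OF P beta A sub'] unfolding IJ
    by (rule product_integral_insert[OF finJ iJ, symmetric])
  finally show ?thesis .
qed




lemma telescope_sum:
  fixes a :: "nat \<Rightarrow> real" and m :: nat
  shows "(\<Sum>i\<in>{1..m}. a (i - 1) - a i) = a 0 - a m"
  by (induction m) (auto simp: sum.cl_ivl_Suc)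

lemma zeta_zero: "ma_zeta Q w 0 = 0"
  by (simp add: ma_zeta_def)

theorem theorem4p2:
  fixes P :: "'z measure"
    and Q :: "'z \<Rightarrow> real ^ 'm \<Rightarrow> real"
    and \<Psi> :: "real ^ 'm \<Rightarrow> real ^ 'm \<Rightarrow> real"
    and \<beta> :: real and n :: nat
  assumes "prob_space P"
    and "CARD('m) \<ge> 2"
    and "n \<ge> 1"
    and Q_meas: "(\<lambda>(z, \<theta>). Q z \<theta>) \<in> borel_measurable (P \<Otimes>\<^sub>M restrict_space borel Theta)"
    and A_exists: "\<And>\<theta>. \<theta> \<in> Theta \<Longrightarrow> ext_expectation_exists P (\<lambda>z. Q z \<theta>)"
    and A_vertex_finite: "\<And>j. integrable P (\<lambda>z. Q z (axis j 1))"
    and "\<beta> > 0"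
    and Psi_meas: "(\<lambda>(\<theta>, \<theta>'). \<Psi> \<theta> \<theta>') \<in> borel_measurable (restrict_space borel (Theta \<times> Theta))"
    and Psi_nonneg: "\<And>\<theta> \<theta>'. \<theta> \<in> Theta \<Longrightarrow> \<theta>' \<in> Theta \<Longrightarrow> \<Psi> \<theta> \<theta>' \<ge> 0"
    and Psi_concave: "\<And>\<theta>'. \<theta>' \<in> Theta \<Longrightarrow> concave_on Theta (\<lambda>\<theta>. \<Psi> \<theta> \<theta>')"
    and Psi_diag: "\<And>\<theta>. \<theta> \<in> Theta \<Longrightarrow> \<Psi> \<theta> \<theta> = 1"
    and Psi_bound: "\<And>\<theta> \<theta>'. \<theta> \<in> Theta \<Longrightarrow> \<theta>' \<in> Theta \<Longrightarrow>
          (\<integral>\<^sup>+ z. ennreal (exp (- (Q z \<theta> - Q z \<theta>') / \<beta>)) \<partial>P) \<le> ennreal (\<Psi> \<theta> \<theta>')"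
  shows "ext_expectation_ereal (PiM {1..n-1} (\<lambda>_. P))
            (\<lambda>\<omega>. ext_expectation P (\<lambda>z. Q z (ma_hat \<beta> Q n \<omega>)))
         \<le> (MIN j. ext_expectation P (\<lambda>z. Q z (axis j 1)))
            + ereal (\<beta> * ln (real CARD('m)) / real n)"
proof -
  note P = assms(1) and n = assms(3) and beta = assms(7)
  interpret P: prob_space P by (rule P)
  define I where "I = {1..n-1}"
  interpret PI: prob_space "PiM I (\<lambda>_. P)" using P by (intro prob_space_PiM)
  obtain m where nm: "n = Suc m" using n by (cases n) auto
  have Im: "I = {1..m}" unfolding I_def nm by simp
  have finI: "finite I" unfolding I_def by simp
  define Aj where "Aj j = integral\<^sup>L P (\<lambda>z. Q z (axis j 1))" for j
  define g where "g i w = (\<integral>z. LSE \<beta> (ma_zeta Q w (i - 1) + ma_u Q z) \<partial>P)" for i w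
  define L where "L i w = LSE \<beta> (ma_zeta Q w i)" for i w
  have main: "ext_expectation_ereal (PiM I (\<lambda>_. P))
            (\<lambda>\<omega>. ext_expectation P (\<lambda>z. Q z (ma_hat \<beta> Q n \<omega>)))
         \<le> ereal (Aj j) + ereal (\<beta> * ln (real CARD('m)) / real n)" for j
  proof -
    define R where "R w = \<beta> / real n * ((\<Sum>i\<in>{1..m}. L (i - 1) w - g i w) + L m w
          + ((\<Sum>k\<in>{1..m}. Q (w k) (axis j 1)) + Aj j) / \<beta>)" for w
    have pw: "ext_expectation P (\<lambda>z. Q z (ma_hat \<beta> Q n w)) \<le> ereal (R w)" for w
    proof -
      have "ext_expectation P (\<lambda>z. Q z (ma_hat \<beta> Q n w))
          \<le> ereal (\<beta> / real n * (\<Sum>i\<in>{1..n}. L (i - 1) w - g i w))"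
        using per_omega[where Q=Q and \<Psi>=\<Psi>, OF P n Q_meas A_vertex_finite beta Psi_nonneg Psi_concave Psi_diag Psi_bound]
        unfolding L_def g_def by blast
      also have "\<beta> / real n * (\<Sum>i\<in>{1..n}. L (i - 1) w - g i w)
           = \<beta> / real n * ((\<Sum>i\<in>{1..m}. L (i - 1) w - g i w) + L m w - g n w)"
        unfolding nm by (simp add: sum.cl_ivl_Suc)
      also have "\<dots> \<le> R w"
      proof -
        have i1: "integrable P (\<lambda>z. LSE \<beta> (ma_zeta Q w m + ma_u Q z))"
          by (rule LSE_shift_int[where Q=Q, OF P beta A_vertex_finite])
        have "(\<integral>z. - (ma_zeta Q w m $ j + Q z (axis j 1)) / \<beta> \<partial>P) \<le> g n w"
          unfolding g_def nm
        proof (simp only: diff_Suc_1, rule integral_mono[OF _ i1])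
          show "integrable P (\<lambda>z. - (ma_zeta Q w m $ j + Q z (axis j 1)) / \<beta>)"
            using A_vertex_finite by auto
          fix z
          show "- (ma_zeta Q w m $ j + Q z (axis j 1)) / \<beta> \<le> LSE \<beta> (ma_zeta Q w m + ma_u Q z)"
            using LSE_lower[OF beta, of "ma_zeta Q w m + ma_u Q z" j] by (simp add: ma_u_def)
        qed
        moreover have "(\<integral>z. - (ma_zeta Q w m $ j + Q z (axis j 1)) / \<beta> \<partial>P) = - (ma_zeta Q w m $ j + Aj j) / \<beta>"
          using A_vertex_finite unfolding Aj_def by (simp add: P.prob_space)
        ultimately have "- (ma_zeta Q w m $ j + Aj j) / \<beta> \<le> g n w" using beta by force
        then have "- g n w \<le> (ma_zeta Q w m $ j + Aj j) / \<beta>"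
          by (simp add: diff_divide_distrib add_divide_distrib)
        then show ?thesis unfolding R_def using beta n
          by (intro mult_left_mono) (auto simp: zeta_comp)
      qed
      finally show ?thesis by simp
    qed
    have subI: "k \<le> m \<Longrightarrow> {1..k} \<subseteq> I" for k unfolding Im by auto
    have Lint: "k \<le> m \<Longrightarrow> integrable (PiM I (\<lambda>_. P)) (L k)" for k
      unfolding L_def by (rule LSE_zeta_int[where Q=Q, OF P beta A_vertex_finite subI])
    have gint: "1 \<le> i \<Longrightarrow> i \<le> m \<Longrightarrow> integrable (PiM I (\<lambda>_. P)) (g i)" for i
      unfolding g_def by (rule g_int[where Q=Q, OF P beta A_vertex_finite subI]) simp
    have qint: "k \<in> {1..m} \<Longrightarrow> integrable (PiM I (\<lambda>_. P)) (\<lambda>w. Q (w k) (axis j 1))"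
      and qeq: "k \<in> {1..m} \<Longrightarrow> (\<integral>w. Q (w k) (axis j 1) \<partial>PiM I (\<lambda>_. P)) = Aj j" for k
      using PiM_comp_int[OF P _ A_vertex_finite, of k I j] unfolding Aj_def Im by auto
    have geq: "1 \<le> i \<Longrightarrow> i \<le> m \<Longrightarrow> integral\<^sup>L (PiM I (\<lambda>_. P)) (g i) = integral\<^sup>L (PiM I (\<lambda>_. P)) (L i)" for i
      unfolding g_def L_def
      by (rule telescope_step[where Q=Q, OF P beta A_vertex_finite subI finI, symmetric])
    have Rint: "integrable (PiM I (\<lambda>_. P)) R"
      unfolding R_def using Lint gint qint
      by (intro integrable_mult_right Bochner_Integration.integrable_add integrable_divide
          Bochner_Integration.integrable_sum Bochner_Integration.integrable_diff PI.integrable_const) auto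
    have "integral\<^sup>L (PiM I (\<lambda>_. P)) R = \<beta> / real n * ((\<Sum>i\<in>{1..m}. integral\<^sup>L (PiM I (\<lambda>_. P)) (L (i - 1))
          - integral\<^sup>L (PiM I (\<lambda>_. P)) (g i)) + integral\<^sup>L (PiM I (\<lambda>_. P)) (L m)
          + ((\<Sum>k\<in>{1..m}. Aj j) + Aj j) / \<beta>)"
    proof -
      let ?M = "PiM I (\<lambda>_. P)"
      have s1i: "integrable ?M (\<lambda>w. \<Sum>i\<in>{1..m}. L (i - 1) w - g i w)"
        using Lint gint by (intro Bochner_Integration.integrable_sum Bochner_Integration.integrable_diff) auto
      have s1: "(\<integral>w. (\<Sum>i\<in>{1..m}. L (i - 1) w - g i w) \<partial>?M)
          = (\<Sum>i\<in>{1..m}. integral\<^sup>L ?M (L (i - 1)) - integral\<^sup>L ?M (g i))"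
      proof -
        have "(\<integral>w. (\<Sum>i\<in>{1..m}. L (i - 1) w - g i w) \<partial>?M) = (\<Sum>i\<in>{1..m}. (\<integral>w. L (i - 1) w - g i w \<partial>?M))"
          using Lint gint by (intro Bochner_Integration.integral_sum Bochner_Integration.integrable_diff) auto
        also have "\<dots> = (\<Sum>i\<in>{1..m}. integral\<^sup>L ?M (L (i - 1)) - integral\<^sup>L ?M (g i))"
          using Lint gint by (intro sum.cong refl Bochner_Integration.integral_diff) auto
        finally show ?thesis .
      qed
      have s2i: "integrable ?M (\<lambda>w. \<Sum>k\<in>{1..m}. Q (w k) (axis j 1))"
        using qint by (intro Bochner_Integration.integrable_sum) auto
      have s2: "(\<integral>w. (\<Sum>k\<in>{1..m}. Q (w k) (axis j 1)) \<partial>?M) = (\<Sum>k\<in>{1..m}. Aj j)"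
        using qint qeq by (simp add: Bochner_Integration.integral_sum)
      have Lmi: "integrable ?M (L m)" using Lint by simp
      have s3i: "integrable ?M (\<lambda>w. ((\<Sum>k\<in>{1..m}. Q (w k) (axis j 1)) + Aj j) / \<beta>)"
        using s2i by (intro integrable_divide Bochner_Integration.integrable_add PI.integrable_const)
      have s3: "(\<integral>w. ((\<Sum>k\<in>{1..m}. Q (w k) (axis j 1)) + Aj j) / \<beta> \<partial>?M) = ((\<Sum>k\<in>{1..m}. Aj j) + Aj j) / \<beta>"
        using s2i s2 by (simp add: Bochner_Integration.integral_add PI.prob_space)
      have "integral\<^sup>L ?M R = \<beta> / real n * ((\<integral>w. (\<Sum>i\<in>{1..m}. L (i - 1) w - g i w) \<partial>?M) + integral\<^sup>L ?M (L m)
          + (\<integral>w. ((\<Sum>k\<in>{1..m}. Q (w k) (axis j 1)) + Aj j) / \<beta> \<partial>?M))"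
        unfolding R_def using s1i Lmi s3i
        by (simp add: Bochner_Integration.integral_add Bochner_Integration.integrable_add)
      then show ?thesis unfolding s1 s3 .
    qed
    also have "(\<Sum>i\<in>{1..m}. integral\<^sup>L (PiM I (\<lambda>_. P)) (L (i - 1)) - integral\<^sup>L (PiM I (\<lambda>_. P)) (g i))
        = (\<Sum>i\<in>{1..m}. integral\<^sup>L (PiM I (\<lambda>_. P)) (L (i - 1)) - integral\<^sup>L (PiM I (\<lambda>_. P)) (L i))"
      using geq by (intro sum.cong) auto
    also have "\<dots> = integral\<^sup>L (PiM I (\<lambda>_. P)) (L 0) - integral\<^sup>L (PiM I (\<lambda>_. P)) (L m)"
      by (rule telescope_sum)
    also have "integral\<^sup>L (PiM I (\<lambda>_. P)) (L 0) = ln (real CARD('m))"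
      unfolding L_def zeta_zero LSE_zero by (simp add: PI.prob_space)
    finally have "integral\<^sup>L (PiM I (\<lambda>_. P)) R = \<beta> / real n * (ln (real CARD('m)) + (real m * Aj j + Aj j) / \<beta>)"
      by simp
    also have "\<dots> = Aj j + \<beta> * ln (real CARD('m)) / real n"
    proof -
      have e: "real m * Aj j + Aj j = real n * Aj j" unfolding nm by (simp add: algebra_simps)
      have "\<beta> / real n * (ln (real CARD('m)) + (real n * Aj j) / \<beta>)
          = \<beta> * ln (real CARD('m)) / real n + (\<beta> / \<beta>) * (real n / real n) * Aj j"
        by (simp add: distrib_left)
      also have "\<dots> = Aj j + \<beta> * ln (real CARD('m)) / real n" using beta n by simp
      finally show ?thesis unfolding e .
    qed
    finally have Req: "integral\<^sup>L (PiM I (\<lambda>_. P)) R = Aj j + \<beta> * ln (real CARD('m)) / real n" .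
    have "ext_expectation_ereal (PiM I (\<lambda>_. P)) (\<lambda>\<omega>. ext_expectation P (\<lambda>z. Q z (ma_hat \<beta> Q n \<omega>)))
        \<le> ereal (integral\<^sup>L (PiM I (\<lambda>_. P)) R)"
      using pw Rint by (rule ext_exp_ereal_le)
    then show ?thesis unfolding Req by simp
  qed
  have fin: "finite (range (\<lambda>j::'m. ext_expectation P (\<lambda>z. Q z (axis j 1))))" by simp
  obtain j where j: "(MIN j. ext_expectation P (\<lambda>z. Q z (axis j 1))) = ext_expectation P (\<lambda>z. Q z (axis j 1))"
  proof -
    have "(MIN j. ext_expectation P (\<lambda>z. Q z (axis j 1))) \<in> range (\<lambda>j::'m. ext_expectation P (\<lambda>z. Q z (axis j 1)))"
      by (rule Min_in[OF fin]) simp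
    then show ?thesis using that by blast
  qed
  have "ext_expectation P (\<lambda>z. Q z (axis j 1)) = ereal (Aj j)"
    unfolding Aj_def by (rule ext_exp_integrable[OF A_vertex_finite])
  with main[of j] j show ?thesis unfolding I_def by simp
qed


end
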